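(* Call-by-value coupled logical bisimilarity coincides with the contextual equivalences: $(\approx^v_1,\approx^v_2)=(\simeq^v,\cong^v)$. In particular $(\simeq^v,\cong^v)$ is itself a call-by-value coupled logical bisimulation, and $\approx^v_1=\simeq^v=\cong^v=\approx^v_2$.
   Context: $\Lambda^\bullet$ is the set of closed $\lambda$-terms; values are closed abstractions. Call-by-value reduction on closed terms: $MN\longrightarrow MN'$ if $N\longrightarrow N'$; $MV\longrightarrow M'V$ if $M\longrightarrow M'$ and $V$ is a value; $(\lambda x.P)V\longrightarrow P[V/x]$ if $V$ is a value; $\Longrightarrow$ is the reflexive transitive closure; $M{\Downarrow}$ means $M\Longrightarrow V$ for some value $V$. Contexts are generated by $C::=x\mid[\cdot]\mid C\,C\mid\lambda x.C$, possibly with several holes numbered left to right; $C[\widetilde M]$ fills the $i$-th hole with $M_i$; $C[M]$ fills every hole with $M$. For $\mathcal{R}\subseteq\Lambda^\bullet\times\Lambda^\bullet$, $\mathcal{R}^\star=\{(C[\widetilde M],C[\widetilde N]) : C\text{ a context},\ M_i\,\mathcal{R}\,N_i\ \forall i,\ C[\widetilde M],C[\widetilde N]\in\Lambda^\bullet\}$. $M\simeq^v N$ iff for all contexts $C$ with $C[M],C[N]$ closed, $C[M]{\Downarrow}\iff C[N]{\Downarrow}$. Call-by-value evaluation contexts: $\mathcal{E}::=[\cdot]\mid M\,\mathcal{E}\mid\mathcal{E}\,V$ ($M\in\Lambda^\bullet$, $V$ a value); $M\cong^v N$ iff for all $\mathcal{E}$, $\mathcal{E}[M]{\Downarrow}\iff\mathcal{E}[N]{\Downarrow}$.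 A coupled relation is a pair $(\mathcal{R}_1,\mathcal{R}_2)$ of relations on $\Lambda^\bullet$ with $\mathcal{R}_1\subseteq\mathcal{R}_2$. It is a call-by-value coupled logical bisimulation if whenever $M\,\mathcal{R}_2\,N$: (1) if $M\longrightarrow M'$ then there is $N'$ with $N\Longrightarrow N'$ and $M'\,\mathcal{R}_2\,N'$; (2) if $M=\lambda x.M'$ then $N\Longrightarrow\lambda x.N'$ for some $N'$, $\lambda x.M'\,\mathcal{R}_1\,\lambda x.N'$, and for all values $P,Q$ with $P\,\mathcal{R}_1^\star\,Q$, $M'[P/x]\,\mathcal{R}_2\,N'[Q/x]$; (3) the converses of (1),(2) with $M$ and $N$ exchanged. $(\approx^v_1,\approx^v_2)$ is the componentwise union of all call-by-value coupled logical bisimulations. *)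

theory Defs
  imports Main
begin

datatype trm = Var nat | App trm trm | Lam trm

fun closedn :: "nat \<Rightarrow> trm \<Rightarrow> bool" where
  "closedn k (Var i) = (i < k)"
| "closedn k (App M N) = (closedn k M \<and> closedn k N)"
| "closedn k (Lam M) = closedn (Suc k) M"

definition closed :: "trm \<Rightarrow> bool" where
  "closed M = closedn 0 M"

text \<open>Substitution of a closed term P for index k (no lifting needed as P is closed).\<close>
fun subst :: "trm \<Rightarrow> nat \<Rightarrow> trm \<Rightarrow> trm" where
  "subst (Var i) k P = (if i < k then Var i else if i = k then P else Var (i - 1))"
| "subst (App M N) k P = App (subst M k P) (subst N k P)"
| "subst (Lam M) k P = Lam (subst M (Suc k) P)"

definition is_value :: "trm \<Rightarrow> bool" where
  "is_value M = (\<exists>P. M = Lam P)"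

inductive red :: "trm \<Rightarrow> trm \<Rightarrow> bool" where
  appR: "red N N' \<Longrightarrow> red (App M N) (App M N')"
| appL: "red M M' \<Longrightarrow> is_value V \<Longrightarrow> red (App M V) (App M' V)"
| beta: "is_value V \<Longrightarrow> red (App (Lam P) V) (subst P 0 V)"

abbreviation reds :: "trm \<Rightarrow> trm \<Rightarrow> bool" where
  "reds \<equiv> red\<^sup>*\<^sup>*"

definition conv :: "trm \<Rightarrow> bool" where
  "conv M = (\<exists>V. reds M V \<and> is_value V)"

datatype ctx = CVar nat | CHole | CApp ctx ctx | CLam ctx

fun nholes :: "ctx \<Rightarrow> nat" where
  "nholes (CVar i) = 0"
| "nholes CHole = 1"
| "nholes (CApp C D) = nholes C + nholes D"
| "nholes (CLam C) = nholes C"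

text \<open>Fill the holes, numbered left to right, with the terms of the list.\<close>
fun fill :: "ctx \<Rightarrow> trm list \<Rightarrow> trm" where
  "fill (CVar i) Ms = Var i"
| "fill CHole Ms = hd Ms"
| "fill (CApp C D) Ms = App (fill C (take (nholes C) Ms)) (fill D (drop (nholes C) Ms))"
| "fill (CLam C) Ms = Lam (fill C Ms)"

definition fill_all :: "ctx \<Rightarrow> trm \<Rightarrow> trm" where
  "fill_all C M = fill C (replicate (nholes C) M)"

definition closed_rel :: "(trm \<times> trm) set" where
  "closed_rel = {(M, N). closed M \<and> closed N}"

definition ctx_closure :: "(trm \<times> trm) set \<Rightarrow> (trm \<times> trm) set" where
  "ctx_closure R = {(fill C Ms, fill C Ns) | C Ms Ns.
      length Ms = nholes C \<and> length Ns = nholes C \<and>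
      (\<forall>i < nholes C. (Ms ! i, Ns ! i) \<in> R) \<and>
      closed (fill C Ms) \<and> closed (fill C Ns)}"

definition ctx_equiv :: "(trm \<times> trm) set" where
  "ctx_equiv = {(M, N). closed M \<and> closed N \<and>
     (\<forall>C. closed (fill_all C M) \<and> closed (fill_all C N) \<longrightarrow>
          (conv (fill_all C M) \<longleftrightarrow> conv (fill_all C N)))}"

text \<open>Call-by-value evaluation contexts E ::= [.] | M E | E V, M closed, V a closed value.\<close>
datatype ectx = EHole | EArg trm ectx | EFun ectx trm

fun wf_ectx :: "ectx \<Rightarrow> bool" where
  "wf_ectx EHole = True"
| "wf_ectx (EArg M E) = (closed M \<and> wf_ectx E)"
| "wf_ectx (EFun E V) = (wf_ectx E \<and> closed V \<and> is_value V)"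

fun efill :: "ectx \<Rightarrow> trm \<Rightarrow> trm" where
  "efill EHole M = M"
| "efill (EArg N E) M = App N (efill E M)"
| "efill (EFun E V) M = App (efill E M) V"

definition ectx_equiv :: "(trm \<times> trm) set" where
  "ectx_equiv = {(M, N). closed M \<and> closed N \<and>
     (\<forall>E. wf_ectx E \<longrightarrow> (conv (efill E M) \<longleftrightarrow> conv (efill E N)))}"

text \<open>Clauses (1) and (2) for one direction.\<close>
definition clb_progress :: "(trm \<times> trm) set \<Rightarrow> (trm \<times> trm) set \<Rightarrow> bool" where
  "clb_progress R1 R2 = (\<forall>M N. (M, N) \<in> R2 \<longrightarrow>
     (\<forall>M'. red M M' \<longrightarrow> (\<exists>N'. reds N N' \<and> (M', N') \<in> R2)) \<and>
     (\<forall>M'. M = Lam M' \<longrightarrow> (\<exists>N'. reds N (Lam N') \<and> (Lam M', Lam N') \<in> R1 \<and>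
        (\<forall>P Q. is_value P \<and> is_value Q \<and> (P, Q) \<in> ctx_closure R1 \<longrightarrow>
             (subst M' 0 P, subst N' 0 Q) \<in> R2))))"

definition cbv_clb :: "(trm \<times> trm) set \<Rightarrow> (trm \<times> trm) set \<Rightarrow> bool" where
  "cbv_clb R1 R2 = (R1 \<subseteq> R2 \<and> R2 \<subseteq> closed_rel \<and>
     clb_progress R1 R2 \<and> clb_progress (R1\<inverse>) (R2\<inverse>))"

definition bisim1 :: "(trm \<times> trm) set" where
  "bisim1 = \<Union> {R1. \<exists>R2. cbv_clb R1 R2}"

definition bisim2 :: "(trm \<times> trm) set" where
  "bisim2 = \<Union> {R2. \<exists>R1. cbv_clb R1 R2}"

end

theory Submission
  imports Defs
begin


lemma closedn_mono: "closedn k M \<Longrightarrow> k \<le> m \<Longrightarrow> closedn m M"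
  by (induction M arbitrary: k m) auto

lemma closed_closedn: "closed M \<Longrightarrow> closedn k M"
  unfolding closed_def using closedn_mono by blast

lemma subst_closedn_id: "closedn k M \<Longrightarrow> subst M k P = M"
  by (induction M arbitrary: k) auto

lemma subst_closed_id: "closed M \<Longrightarrow> subst M k P = M"
  using subst_closedn_id closed_closedn by blast

lemma closedn_subst: "closedn (Suc n) B \<Longrightarrow> closed V \<Longrightarrow> k \<le> n \<Longrightarrow> closedn n (subst B k V)"
proof (induction B arbitrary: n k)
  case (Var i)
  have c: "closedn n V" using Var(2) closed_closedn by blast
  show ?case
  proof (cases "i < k")
    case True then show ?thesis using Var(3) by simp
  next
    case False
    then show ?thesis using Var(1) c by (cases "i = k") auto
  qed
qed auto

lemma closed_subst: "closed (Lam B) \<Longrightarrow> closed V \<Longrightarrow> closed (subst B 0 V)"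
  unfolding closed_def using closedn_subst[of 0 B V 0] by (simp add: closed_def)

lemma value_Lam: "is_value V \<longleftrightarrow> (\<exists>P. V = Lam P)" by (simp add: is_value_def)

lemma red_Lam: "red (Lam P) X \<Longrightarrow> False"
  by (cases rule: red.cases) auto

lemma value_nored: "is_value V \<Longrightarrow> \<not> red V X"
  using red_Lam by (auto simp: is_value_def)

lemma red_det: "red M N1 \<Longrightarrow> red M N2 \<Longrightarrow> N1 = N2"
proof (induction arbitrary: N2 rule: red.induct)
  case (appR N N' M)
  from appR.prems show ?case
  proof (cases rule: red.cases)
    case (appR N'') then show ?thesis using appR.IH by simp
  next
    case (appL M') then show ?thesis using appR.hyps value_nored by blast
  next
    case (beta P) then show ?thesis using appR.hyps value_nored by blast
  qed
next
  case (appL M M' V)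
  from appL.prems show ?case
  proof (cases rule: red.cases)
    case (appR N'') then show ?thesis using appL.hyps value_nored by blast
  next
    case (appL M'') then show ?thesis using appL.IH by simp
  next
    case (beta P) then show ?thesis using appL.hyps red_Lam by blast
  qed
next
  case (beta V P)
  from beta.prems show ?case
  proof (cases rule: red.cases)
    case (appR N'') then show ?thesis using beta.hyps value_nored by blast
  next
    case (appL M'') then show ?thesis using red_Lam by blast
  next
    case beta then show ?thesis by simp
  qed
qed

lemma red_closed: "red M M' \<Longrightarrow> closed M \<Longrightarrow> closed M'"
  by (induction rule: red.induct) (auto simp: closed_def intro: closed_subst[unfolded closed_def])

lemma reds_closed: "reds M M' \<Longrightarrow> closed M \<Longrightarrow> closed M'"
  by (induction rule: rtranclp_induct) (auto intro: red_closed)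

lemma reds_value_eq: "reds V X \<Longrightarrow> is_value V \<Longrightarrow> X = V"
  by (induction rule: converse_rtranclp_induct) (auto dest: value_nored)

section \<open>Big step\<close>

inductive bs :: "trm \<Rightarrow> trm \<Rightarrow> bool" where
  bsLam: "bs (Lam M) (Lam M)"
| bsApp: "bs M (Lam B) \<Longrightarrow> bs N V \<Longrightarrow> bs (subst B 0 V) W \<Longrightarrow> bs (App M N) W"

lemma bs_value: "bs M W \<Longrightarrow> \<exists>B. W = Lam B"
  by (induction rule: bs.induct) auto

lemma bs_Lam: "bs (Lam X) Y \<Longrightarrow> Y = Lam X"
  by (cases rule: bs.cases) auto

lemma reds_appR: "reds N N' \<Longrightarrow> reds (App M N) (App M N')"
  by (induction rule: rtranclp_induct) (auto intro: rtranclp.rtrancl_into_rtrancl red.appR)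

lemma reds_appL: "reds M M' \<Longrightarrow> is_value V \<Longrightarrow> reds (App M V) (App M' V)"
  by (induction rule: rtranclp_induct) (auto intro: rtranclp.rtrancl_into_rtrancl red.appL)

lemma bs_reds: "bs M W \<Longrightarrow> reds M W"
proof (induction rule: bs.induct)
  case (bsLam M) then show ?case by simp
next
  case (bsApp M B N V W)
  have v: "is_value V" using bs_value[OF bsApp(2)] by (auto simp: is_value_def)
  have "reds (App M N) (App M V)" using reds_appR[OF bsApp(5)] .
  also have "reds (App M V) (App (Lam B) V)" using reds_appL[OF bsApp(4) v] .
  also have "red (App (Lam B) V) (subst B 0 V)" using red.beta[OF v] .
  also have "reds (subst B 0 V) W" by fact
  finally show ?case .
qed

lemma red_bs: "red M M' \<Longrightarrow> bs M' W \<Longrightarrow> bs M W"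
proof (induction arbitrary: W rule: red.induct)
  case (appR N N' M)
  from appR.prems show ?case
    by (cases rule: bs.cases) (auto intro: bs.bsApp appR.IH)
next
  case (appL M M' V)
  from appL.prems show ?case
  proof (cases rule: bs.cases)
    case (bsApp B V0)
    obtain X where V: "V = Lam X" using appL(2) by (auto simp: is_value_def)
    have "V0 = V" using bsApp(2) V bs_Lam by blast
    then show ?thesis using bsApp by (auto intro: bs.bsApp appL.IH)
  qed
next
  case (beta V P)
  obtain X where V: "V = Lam X" using beta(1) by (auto simp: is_value_def)
  show ?case by (rule bs.bsApp[OF bs.bsLam _ beta(2)]) (simp add: V bs.bsLam)
qed

lemma reds_bs: "reds M V \<Longrightarrow> is_value V \<Longrightarrow> bs M V"
proof (induction rule: converse_rtranclp_induct)
  case base then show ?case by (auto simp: is_value_def intro: bs.bsLam)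
next
  case (step y z) then show ?case using red_bs by blast
qed

lemma bs_is_value: "bs M W \<Longrightarrow> is_value W"
  using bs_value is_value_def by blast

lemma conv_bs: "conv M \<longleftrightarrow> (\<exists>W. bs M W)"
  unfolding conv_def using bs_reds reds_bs bs_is_value by blast

lemma bs_closed: "bs M W \<Longrightarrow> closed M \<Longrightarrow> closed W"
proof (induction rule: bs.induct)
  case (bsApp M B N V W)
  then have "closed (Lam B)" "closed V" by (auto simp: closed_def)
  then show ?case using bsApp closed_subst by blast
qed auto

section \<open>Evaluation contexts\<close>

lemma red_efill: "red M M' \<Longrightarrow> wf_ectx E \<Longrightarrow> red (efill E M) (efill E M')"
  by (induction E) (auto intro: red.intros)

lemma closed_efill: "wf_ectx E \<Longrightarrow> closed M \<Longrightarrow> closed (efill E M)"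
  by (induction E) (auto simp: closed_def)

lemma conv_red: assumes r: "red X X'" shows "conv X \<longleftrightarrow> conv X'"
proof
  assume "conv X'" then show "conv X" unfolding conv_def
    using converse_rtranclp_into_rtranclp[of red X X'] r by blast
next
  assume "conv X"
  then obtain V where "reds X V" "is_value V" unfolding conv_def by blast
  then show "conv X'"
  proof (cases rule: converse_rtranclpE)
    case base then show ?thesis using r `is_value V` value_nored by blast
  next
    case (step Y) then show ?thesis using r red_det `is_value V` unfolding conv_def by blast
  qed
qed

lemma red_equiv: "red M M' \<Longrightarrow> closed M \<Longrightarrow> (M, M') \<in> ectx_equiv"
  unfolding ectx_equiv_def using red_closed red_efill conv_red by blast

lemma equiv_sym: "(M, N) \<in> ectx_equiv \<Longrightarrow> (N, M) \<in> ectx_equiv"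
  unfolding ectx_equiv_def by blast

lemma equiv_trans: "(M, N) \<in> ectx_equiv \<Longrightarrow> (N, L) \<in> ectx_equiv \<Longrightarrow> (M, L) \<in> ectx_equiv"
  unfolding ectx_equiv_def by blast

lemma equiv_refl: "closed M \<Longrightarrow> (M, M) \<in> ectx_equiv"
  unfolding ectx_equiv_def by simp

lemma equiv_closed: "(M, N) \<in> ectx_equiv \<Longrightarrow> closed M \<and> closed N"
  unfolding ectx_equiv_def by blast

lemma reds_equiv: "reds M M' \<Longrightarrow> closed M \<Longrightarrow> (M, M') \<in> ectx_equiv"
proof (induction rule: rtranclp_induct)
  case base then show ?case by (rule equiv_refl)
next
  case (step y z)
  have "closed y" using step reds_closed by blast
  then have "(y, z) \<in> ectx_equiv" using step red_equiv by blast
  then show ?case using step equiv_trans by blast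
qed

lemma equiv_conv: "(M, N) \<in> ectx_equiv \<Longrightarrow> conv M \<Longrightarrow> conv N"
proof -
  assume a: "(M, N) \<in> ectx_equiv" "conv M"
  have w: "wf_ectx EHole" by simp
  have "conv (efill EHole M) = conv (efill EHole N)"
    using a(1) w unfolding ectx_equiv_def by blast
  then show ?thesis using a(2) by simp
qed

fun ecomp :: "ectx \<Rightarrow> ectx \<Rightarrow> ectx" where
  "ecomp EHole F = F"
| "ecomp (EArg N E) F = EArg N (ecomp E F)"
| "ecomp (EFun E V) F = EFun (ecomp E F) V"

lemma efill_ecomp: "efill (ecomp E F) M = efill E (efill F M)"
  by (induction E) auto

lemma wf_ecomp: "wf_ectx E \<Longrightarrow> wf_ectx F \<Longrightarrow> wf_ectx (ecomp E F)"
  by (induction E) auto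

lemma equiv_appV:
  assumes "(M, N) \<in> ectx_equiv" "closed V" "is_value V"
  shows "(App M V, App N V) \<in> ectx_equiv"
proof -
  have h: "\<forall>E. wf_ectx E \<longrightarrow> conv (efill E M) = conv (efill E N)" "closed M" "closed N"
    using assms(1) unfolding ectx_equiv_def by auto
  have c: "closed (App M V)" "closed (App N V)" using h assms by (auto simp: closed_def)
  have "conv (efill E (App M V)) = conv (efill E (App N V))" if wf: "wf_ectx E" for E
  proof -
    have "wf_ectx (ecomp E (EFun EHole V))" using wf assms by (auto intro: wf_ecomp)
    then have "conv (efill (ecomp E (EFun EHole V)) M) = conv (efill (ecomp E (EFun EHole V)) N)"
      using h(1) by blast
    then show ?thesis unfolding efill_ecomp efill.simps .
  qed
  then show ?thesis using c unfolding ectx_equiv_def by blast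
qed



section \<open>Howe-style relation for ectx_equiv\<close>

inductive H :: "trm \<Rightarrow> trm \<Rightarrow> bool" where
  hvar: "H (Var i) (Var i)"
| happ: "H M1 N1 \<Longrightarrow> H M2 N2 \<Longrightarrow> H (App M1 M2) (App N1 N2)"
| hlam: "H M N \<Longrightarrow> H (Lam M) (Lam N)"
| hcomp: "closed M \<Longrightarrow> H M N \<Longrightarrow> (N, N') \<in> ectx_equiv \<Longrightarrow> H M N'"

lemma H_refl: "H M M"
  by (induction M) (auto intro: H.intros)

lemma H_equiv: "(M, N) \<in> ectx_equiv \<Longrightarrow> H M N"
  using H.hcomp[OF _ H_refl] equiv_closed by blast

lemma H_closedn: "H M N \<Longrightarrow> closedn k M \<Longrightarrow> closedn k N"
proof (induction arbitrary: k rule: H.induct)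
  case (hcomp M N N')
  then show ?case using equiv_closed closed_closedn by blast
qed auto

lemma H_closed: "H M N \<Longrightarrow> closed M \<Longrightarrow> closed N"
  unfolding closed_def using H_closedn by blast

lemma H_subst: "H B B' \<Longrightarrow> H V W \<Longrightarrow> H (subst B k V) (subst B' k W)"
proof (induction arbitrary: k rule: H.induct)
  case (hvar i)
  then show ?case by (auto intro: H.intros)
next
  case (happ M1 N1 M2 N2)
  then show ?case by (auto intro: H.intros)
next
  case (hlam M N)
  then show ?case by (auto intro: H.intros)
next
  case (hcomp M N N')
  have "closed N'" using hcomp(3) equiv_closed by blast
  then have "subst M k V = M" "subst N' k W = N'" using hcomp(1) subst_closed_id by auto
  moreover have "H M N'" using H.hcomp[OF hcomp(1,2,3)] .
  ultimately show ?case by simp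
qed

lemma H_Lam_inv: "H P Q \<Longrightarrow> P = Lam B \<Longrightarrow>
  \<exists>B1. H B B1 \<and> (Q = Lam B1 \<or> (Lam B1, Q) \<in> ectx_equiv)"
proof (induction arbitrary: B rule: H.induct)
  case (hcomp M N N')
  then obtain B1 where b: "H B B1" "N = Lam B1 \<or> (Lam B1, N) \<in> ectx_equiv" by blast
  have "(Lam B1, N') \<in> ectx_equiv" using b(2) hcomp(3) equiv_trans by blast
  then show ?case using b(1) by blast
qed auto

lemma H_App_inv: "H P Q \<Longrightarrow> P = App P1 P2 \<Longrightarrow>
  \<exists>Q1 Q2. H P1 Q1 \<and> H P2 Q2 \<and> (Q = App Q1 Q2 \<or> (App Q1 Q2, Q) \<in> ectx_equiv)"
proof (induction arbitrary: P1 P2 rule: H.induct)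
  case (hcomp M N N')
  then obtain Q1 Q2 where b: "H P1 Q1" "H P2 Q2" "N = App Q1 Q2 \<or> (App Q1 Q2, N) \<in> ectx_equiv" by blast
  have "(App Q1 Q2, N') \<in> ectx_equiv" using b(3) hcomp(3) equiv_trans by blast
  then show ?case using b(1,2) by blast
qed auto

lemma H_transfer:
  assumes "closed V" "H V W" "bs X W" "closed X" "(X, Q) \<in> ectx_equiv"
  shows "\<exists>W'. bs Q W' \<and> H V W'"
proof -
  have "conv X" using assms(3) conv_bs by blast
  then have "conv Q" using assms(5) equiv_conv by blast
  then obtain W' where w': "bs Q W'" using conv_bs by blast
  have q: "closed Q" using assms(5) equiv_closed by blast
  have "(X, W) \<in> ectx_equiv" using reds_equiv[OF bs_reds[OF assms(3)] assms(4)] .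
  then have "(W, Q) \<in> ectx_equiv" using assms(5) equiv_sym equiv_trans by blast
  moreover have "(Q, W') \<in> ectx_equiv" using reds_equiv[OF bs_reds[OF w'] q] .
  ultimately have "(W, W') \<in> ectx_equiv" using equiv_trans by blast
  then have "H V W'" using H.hcomp[OF assms(1,2)] by blast
  then show ?thesis using w' by blast
qed

lemma lam_equiv_subst:
  assumes "(Lam M, Lam N) \<in> ectx_equiv" "closed W" "is_value W"
  shows "(subst M 0 W, subst N 0 W) \<in> ectx_equiv"
proof -
  have c: "closed (Lam M)" "closed (Lam N)" using assms(1) equiv_closed by auto
  have "(App (Lam M) W, App (Lam N) W) \<in> ectx_equiv" using equiv_appV assms by blast
  moreover have "(App (Lam M) W, subst M 0 W) \<in> ectx_equiv"
    using red_equiv[OF red.beta[OF assms(3)]] c assms(2) by (auto simp: closed_def)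
  moreover have "(App (Lam N) W, subst N 0 W) \<in> ectx_equiv"
    using red_equiv[OF red.beta[OF assms(3)]] c assms(2) by (auto simp: closed_def)
  ultimately show ?thesis using equiv_sym equiv_trans by blast
qed

lemma howe: "bs P V \<Longrightarrow> closed P \<Longrightarrow> H P Q \<Longrightarrow> \<exists>W. bs Q W \<and> H V W"
proof (induction arbitrary: Q rule: bs.induct)
  case (bsLam M)
  obtain B1 where b: "H M B1" "Q = Lam B1 \<or> (Lam B1, Q) \<in> ectx_equiv"
    using H_Lam_inv[OF bsLam(2)] by blast
  have hl: "H (Lam M) (Lam B1)" using b(1) by (rule H.hlam)
  show ?case
  proof (cases "Q = Lam B1")
    case True then show ?thesis using hl bs.bsLam by blast
  next
    case False
    then have e: "(Lam B1, Q) \<in> ectx_equiv" using b(2) by blast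
    then have "closed (Lam B1)" using equiv_closed by blast
    then show ?thesis using H_transfer[OF bsLam(1) hl bs.bsLam _ e] by blast
  qed
next
  case (bsApp M B N V W)
  have cM: "closed M" and cN: "closed N" using bsApp(7) by (auto simp: closed_def)
  obtain Q1 Q2 where q: "H M Q1" "H N Q2" "Q = App Q1 Q2 \<or> (App Q1 Q2, Q) \<in> ectx_equiv"
    using H_App_inv[OF bsApp(8)] by blast
  obtain F where f: "bs Q1 F" "H (Lam B) F" using bsApp(4)[OF cM q(1)] by blast
  obtain W2 where w2: "bs Q2 W2" "H V W2" using bsApp(5)[OF cN q(2)] by blast
  obtain B'' where F: "F = Lam B''" using bs_value[OF f(1)] by blast
  have cLB: "closed (Lam B)" using bs_closed[OF bsApp(1) cM] .
  have cV: "closed V" using bs_closed[OF bsApp(2) cN] .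
  have cW2: "closed W2" using H_closed[OF w2(2) cV] .
  have vW2: "is_value W2" using bs_is_value[OF w2(1)] .
  have cs: "closed (subst B 0 V)" using closed_subst[OF cLB cV] .
  obtain B1 where b1: "H B B1" "F = Lam B1 \<or> (Lam B1, F) \<in> ectx_equiv"
    using H_Lam_inv[OF f(2)] by blast
  have hs: "H (subst B 0 V) (subst B1 0 W2)" using H_subst[OF b1(1) w2(2)] .
  have "H (subst B 0 V) (subst B'' 0 W2)"
  proof (cases "F = Lam B1")
    case True then show ?thesis using hs F by simp
  next
    case False
    then have "(Lam B1, Lam B'') \<in> ectx_equiv" using b1(2) F by simp
    then have "(subst B1 0 W2, subst B'' 0 W2) \<in> ectx_equiv"
      using lam_equiv_subst cW2 vW2 by blast
    then show ?thesis using H.hcomp[OF cs hs] by blast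
  qed
  then obtain W' where w': "bs (subst B'' 0 W2) W'" "H W W'" using bsApp(6)[OF cs] by blast
  have bq: "bs (App Q1 Q2) W'" using bs.bsApp[OF f(1)[unfolded F] w2(1) w'(1)] .
  show ?case
  proof (cases "Q = App Q1 Q2")
    case True then show ?thesis using bq w'(2) by blast
  next
    case False
    then have e: "(App Q1 Q2, Q) \<in> ectx_equiv" using q(3) by blast
    have cW: "closed W" using bs_closed[OF bsApp(3) cs] .
    have "closed (App Q1 Q2)" using e equiv_closed by blast
    then show ?thesis using H_transfer[OF cW w'(2) bq _ e] by blast
  qed
qed

lemma H_conv: "H P Q \<Longrightarrow> closed P \<Longrightarrow> conv P \<Longrightarrow> conv Q"
  using howe conv_bs by blast

lemma H_fill: "length Ms = nholes C \<Longrightarrow> length Ns = nholes C \<Longrightarrow>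
  (\<forall>i < nholes C. (Ms ! i, Ns ! i) \<in> ectx_equiv) \<Longrightarrow> H (fill C Ms) (fill C Ns)"
proof (induction C arbitrary: Ms Ns)
  case (CVar x)
  then show ?case by (auto intro: H.intros)
next
  case CHole
  then have "(hd Ms, hd Ns) \<in> ectx_equiv"
    by (metis One_nat_def hd_conv_nth length_0_conv less_one nholes.simps(2) zero_neq_one)
  then show ?case by (simp add: H_equiv)
next
  case (CApp C1 C2)
  let ?n = "nholes C1"
  have a: "H (fill C1 (take ?n Ms)) (fill C1 (take ?n Ns))"
    using CApp.IH(1)[of "take ?n Ms" "take ?n Ns"] CApp.prems by auto
  have b: "H (fill C2 (drop ?n Ms)) (fill C2 (drop ?n Ns))"
  proof (rule CApp.IH(2))
    show "length (drop ?n Ms) = nholes C2" "length (drop ?n Ns) = nholes C2" using CApp.prems by auto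
    show "\<forall>i<nholes C2. (drop ?n Ms ! i, drop ?n Ns ! i) \<in> ectx_equiv"
    proof (intro allI impI)
      fix i assume "i < nholes C2"
      then have "?n + i < nholes (CApp C1 C2)" by simp
      then have "(Ms ! (?n + i), Ns ! (?n + i)) \<in> ectx_equiv" using CApp.prems(3) by blast
      then show "(drop ?n Ms ! i, drop ?n Ns ! i) \<in> ectx_equiv" using CApp.prems by simp
    qed
  qed
  show ?case using H.happ[OF a b] by simp
next
  case (CLam C)
  then show ?case by (auto intro: H.intros)
qed

lemma H_fill_all: "(M, N) \<in> ectx_equiv \<Longrightarrow> H (fill_all C M) (fill_all C N)"
  unfolding fill_all_def by (rule H_fill) auto

lemma ectx_sub_ctx: "ectx_equiv \<subseteq> ctx_equiv"
proof
  fix p assume "p \<in> ectx_equiv"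
  then obtain M N where p: "p = (M, N)" "(M, N) \<in> ectx_equiv" by (cases p) auto
  then have s: "(N, M) \<in> ectx_equiv" using equiv_sym by blast
  have "closed M" "closed N" using p equiv_closed by auto
  moreover have "conv (fill_all C M) \<longleftrightarrow> conv (fill_all C N)"
    if "closed (fill_all C M)" "closed (fill_all C N)" for C
    using H_conv[OF H_fill_all[OF p(2)]] H_conv[OF H_fill_all[OF s]] that by blast
  ultimately show "p \<in> ctx_equiv" unfolding ctx_equiv_def p by blast
qed

fun ctx_of :: "trm \<Rightarrow> ctx" where
  "ctx_of (Var i) = CVar i"
| "ctx_of (App M N) = CApp (ctx_of M) (ctx_of N)"
| "ctx_of (Lam M) = CLam (ctx_of M)"

lemma nholes_ctx_of[simp]: "nholes (ctx_of t) = 0"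
  by (induction t) auto

lemma fill_ctx_of[simp]: "fill (ctx_of t) Ms = t"
  by (induction t arbitrary: Ms) auto

fun ctx_of_e :: "ectx \<Rightarrow> ctx" where
  "ctx_of_e EHole = CHole"
| "ctx_of_e (EArg N E) = CApp (ctx_of N) (ctx_of_e E)"
| "ctx_of_e (EFun E V) = CApp (ctx_of_e E) (ctx_of V)"

lemma nholes_ctx_of_e[simp]: "nholes (ctx_of_e E) = 1"
  by (induction E) auto

lemma fill_ctx_of_e: "fill (ctx_of_e E) [M] = efill E M"
  by (induction E) auto

lemma fill_all_ctx_of_e: "fill_all (ctx_of_e E) M = efill E M"
  unfolding fill_all_def by (simp add: fill_ctx_of_e)

lemma ctx_sub_ectx: "ctx_equiv \<subseteq> ectx_equiv"
proof
  fix p assume "p \<in> ctx_equiv"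
  then obtain M N where p: "p = (M, N)" "(M, N) \<in> ctx_equiv" by (cases p) auto
  then have c: "closed M" "closed N" unfolding ctx_equiv_def by auto
  have "conv (efill E M) \<longleftrightarrow> conv (efill E N)" if "wf_ectx E" for E
  proof -
    have "closed (fill_all (ctx_of_e E) M)" "closed (fill_all (ctx_of_e E) N)"
      using closed_efill that c by (auto simp: fill_all_ctx_of_e)
    then have "conv (fill_all (ctx_of_e E) M) \<longleftrightarrow> conv (fill_all (ctx_of_e E) N)"
      using p(2) unfolding ctx_equiv_def by blast
    then show ?thesis by (simp add: fill_all_ctx_of_e)
  qed
  then show "p \<in> ectx_equiv" using c p unfolding ectx_equiv_def by blast
qed

lemma ctx_eq: "ctx_equiv = ectx_equiv"
  using ctx_sub_ectx ectx_sub_ctx by blast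



section \<open>Soundness of coupled logical bisimulations\<close>

inductive Y :: "(trm \<times> trm) set \<Rightarrow> trm \<Rightarrow> trm \<Rightarrow> bool" for R where
  yleaf: "(M, N) \<in> R \<Longrightarrow> Y R M N"
| yvar: "Y R (Var i) (Var i)"
| yapp: "Y R M1 N1 \<Longrightarrow> Y R M2 N2 \<Longrightarrow> Y R (App M1 M2) (App N1 N2)"
| ylam: "Y R M N \<Longrightarrow> Y R (Lam M) (Lam N)"

inductive X :: "(trm \<times> trm) set \<Rightarrow> (trm \<times> trm) set \<Rightarrow> trm \<Rightarrow> trm \<Rightarrow> bool" for R1 R2 where
  xleaf: "(M, N) \<in> R2 \<Longrightarrow> X R1 R2 M N"
| xapp: "X R1 R2 M1 N1 \<Longrightarrow> X R1 R2 M2 N2 \<Longrightarrow> X R1 R2 (App M1 M2) (App N1 N2)"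
| xlam: "Y R1 M N \<Longrightarrow> X R1 R2 (Lam M) (Lam N)"

lemma Y_refl: "Y R M M"
  by (induction M) (auto intro: Y.intros)

lemma closed_relD: "(M, N) \<in> R \<Longrightarrow> R \<subseteq> closed_rel \<Longrightarrow> closed M \<and> closed N"
  unfolding closed_rel_def by blast

lemma Y_closedn: "Y R M N \<Longrightarrow> R \<subseteq> closed_rel \<Longrightarrow> closedn k M \<Longrightarrow> closedn k N"
proof (induction arbitrary: k rule: Y.induct)
  case (yleaf M N)
  then show ?case using closed_relD closed_closedn by blast
qed auto

lemma X_closed: "X R1 R2 M N \<Longrightarrow> R1 \<subseteq> closed_rel \<Longrightarrow> R2 \<subseteq> closed_rel \<Longrightarrow> closed M \<Longrightarrow> closed N"
proof (induction rule: X.induct)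
  case (xleaf M N)
  then show ?case using closed_relD by blast
next
  case (xapp M1 N1 M2 N2)
  then show ?case by (auto simp: closed_def)
next
  case (xlam M N)
  then show ?case using Y_closedn unfolding closed_def by fastforce
qed

lemma Y_subst: "Y R B B' \<Longrightarrow> R \<subseteq> closed_rel \<Longrightarrow> Y R V W \<Longrightarrow> Y R (subst B k V) (subst B' k W)"
proof (induction arbitrary: k rule: Y.induct)
  case (yleaf M N)
  then have "closed M" "closed N" using closed_relD by blast+
  then show ?case using yleaf Y.yleaf subst_closed_id by simp
qed (auto intro: Y.intros)

lemma Y_X: "Y R1 M N \<Longrightarrow> R1 \<subseteq> R2 \<Longrightarrow> closed M \<Longrightarrow> X R1 R2 M N"
proof (induction rule: Y.induct)
  case (yleaf M N)
  then show ?case by (auto intro: X.xleaf)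
next
  case (yvar i)
  then show ?case by (simp add: closed_def)
next
  case (yapp M1 N1 M2 N2)
  then show ?case by (auto simp: closed_def intro: X.xapp)
next
  case (ylam M N)
  then show ?case by (auto intro: X.xlam)
qed

lemma Y_fill: "Y R M N \<Longrightarrow> \<exists>C Ms Ns. M = fill C Ms \<and> N = fill C Ns \<and>
   length Ms = nholes C \<and> length Ns = nholes C \<and> (\<forall>i < nholes C. (Ms ! i, Ns ! i) \<in> R)"
proof (induction rule: Y.induct)
  case (yleaf M N)
  show ?case by (rule exI[of _ CHole], rule exI[of _ "[M]"], rule exI[of _ "[N]"]) (simp add: yleaf)
next
  case (yvar i)
  show ?case by (rule exI[of _ "CVar i"], rule exI[of _ "[]"], rule exI[of _ "[]"]) simp
next
  case (yapp M1 N1 M2 N2)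
  then obtain C1 Ms1 Ns1 C2 Ms2 Ns2 where
    a: "M1 = fill C1 Ms1" "N1 = fill C1 Ns1" "length Ms1 = nholes C1" "length Ns1 = nholes C1"
       "\<forall>i < nholes C1. (Ms1 ! i, Ns1 ! i) \<in> R" and
    b: "M2 = fill C2 Ms2" "N2 = fill C2 Ns2" "length Ms2 = nholes C2" "length Ns2 = nholes C2"
       "\<forall>i < nholes C2. (Ms2 ! i, Ns2 ! i) \<in> R" by blast
  have "\<forall>i < nholes (CApp C1 C2). ((Ms1 @ Ms2) ! i, (Ns1 @ Ns2) ! i) \<in> R"
  proof (intro allI impI)
    fix i assume i: "i < nholes (CApp C1 C2)"
    show "((Ms1 @ Ms2) ! i, (Ns1 @ Ns2) ! i) \<in> R"
    proof (cases "i < nholes C1")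
      case True then show ?thesis using a by (simp add: nth_append)
    next
      case False then show ?thesis using a b i by (simp add: nth_append)
    qed
  qed
  moreover have "App M1 M2 = fill (CApp C1 C2) (Ms1 @ Ms2)" "App N1 N2 = fill (CApp C1 C2) (Ns1 @ Ns2)"
    using a b by simp_all
  ultimately show ?case using a b by (intro exI[of _ "CApp C1 C2"] exI[of _ "Ms1 @ Ms2"] exI[of _ "Ns1 @ Ns2"]) simp
next
  case (ylam M N)
  then obtain C Ms Ns where "M = fill C Ms \<and> N = fill C Ns \<and>
   length Ms = nholes C \<and> length Ns = nholes C \<and> (\<forall>i < nholes C. (Ms ! i, Ns ! i) \<in> R)" by blast
  then show ?case by (intro exI[of _ "CLam C"] exI[of _ Ms] exI[of _ Ns]) simp
qed

lemma Y_ctx: "Y R M N \<Longrightarrow> closed M \<Longrightarrow> closed N \<Longrightarrow> (M, N) \<in> ctx_closure R"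
  using Y_fill unfolding ctx_closure_def by fastforce

lemma prog1: "clb_progress R1 R2 \<Longrightarrow> (M, N) \<in> R2 \<Longrightarrow> red M M' \<Longrightarrow> \<exists>N'. reds N N' \<and> (M', N') \<in> R2"
  unfolding clb_progress_def by blast

lemma prog2: "clb_progress R1 R2 \<Longrightarrow> (Lam M', N) \<in> R2 \<Longrightarrow>
  \<exists>N'. reds N (Lam N') \<and> (Lam M', Lam N') \<in> R1 \<and>
     (\<forall>P Q. is_value P \<and> is_value Q \<and> (P, Q) \<in> ctx_closure R1 \<longrightarrow> (subst M' 0 P, subst N' 0 Q) \<in> R2)"
  unfolding clb_progress_def by blast

lemma progs: "reds M M' \<Longrightarrow> clb_progress R1 R2 \<Longrightarrow> (M, N) \<in> R2 \<Longrightarrow> \<exists>N'. reds N N' \<and> (M', N') \<in> R2"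
proof (induction rule: rtranclp_induct)
  case base then show ?case by blast
next
  case (step y z)
  then obtain N1 where n1: "reds N N1" "(y, N1) \<in> R2" by blast
  then obtain N2 where n2: "reds N1 N2" "(z, N2) \<in> R2" using prog1 step by blast
  then show ?case using n1 by (meson rtranclp_trans)
qed

lemma leaf_bs: "clb_progress R1 R2 \<Longrightarrow> (P, Q) \<in> R2 \<Longrightarrow> bs P V \<Longrightarrow> \<exists>W. bs Q W \<and> (V, W) \<in> R1"
proof -
  assume pr: "clb_progress R1 R2" and pq: "(P, Q) \<in> R2" and b: "bs P V"
  obtain Q' where q': "reds Q Q'" "(V, Q') \<in> R2" using progs[OF bs_reds[OF b] pr pq] by blast
  obtain M' where V: "V = Lam M'" using bs_value[OF b] by blast
  obtain N' where n: "reds Q' (Lam N')" "(V, Lam N') \<in> R1" using prog2[OF pr q'(2)[unfolded V]] V by blast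
  have "reds Q (Lam N')" using q'(1) n(1) by (meson rtranclp_trans)
  then have "bs Q (Lam N')" using reds_bs by (simp add: is_value_def)
  then show ?thesis using n(2) by blast
qed

lemma sound_bs:
  assumes clb: "cbv_clb R1 R2"
  shows "bs P V \<Longrightarrow> closed P \<Longrightarrow> X R1 R2 P Q \<Longrightarrow> \<exists>W. bs Q W \<and> Y R1 V W"
proof (induction arbitrary: Q rule: bs.induct)
  have pr: "clb_progress R1 R2" and s12: "R1 \<subseteq> R2" and c2: "R2 \<subseteq> closed_rel"
    using clb unfolding cbv_clb_def by auto
  case (bsLam M)
  from bsLam(2) show ?case
  proof (cases rule: X.cases)
    case xleaf
    then show ?thesis using leaf_bs[OF pr _ bs.bsLam] Y.yleaf by blast
  next
    case (xlam N)
    then show ?thesis using Y.ylam bs.bsLam by blast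
  qed
next
  have pr: "clb_progress R1 R2" and s12: "R1 \<subseteq> R2" and c2: "R2 \<subseteq> closed_rel"
    using clb unfolding cbv_clb_def by auto
  have c1: "R1 \<subseteq> closed_rel" using s12 c2 by blast
  case (bsApp M B N V W)
  have cM: "closed M" and cN: "closed N" using bsApp(7) by (auto simp: closed_def)
  from bsApp(8) show ?case
  proof (cases rule: X.cases)
    case xleaf
    then show ?thesis using leaf_bs[OF pr _ bs.bsApp[OF bsApp(1,2,3)]] Y.yleaf by blast
  next
    case (xapp Q1 Q2)
    obtain F where f: "bs Q1 F" "Y R1 (Lam B) F" using bsApp(4)[OF cM xapp(2)] by blast
    obtain W2 where w2: "bs Q2 W2" "Y R1 V W2" using bsApp(5)[OF cN xapp(3)] by blast
    obtain B'' where F: "F = Lam B''" using bs_value[OF f(1)] by blast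
    have cLB: "closed (Lam B)" using bs_closed[OF bsApp(1) cM] .
    have cV: "closed V" using bs_closed[OF bsApp(2) cN] .
    have cQ2: "closed Q2" using X_closed[OF xapp(3) c1 c2 cN] .
    have cW2: "closed W2" using bs_closed[OF w2(1) cQ2] .
    have vW2: "is_value W2" using bs_is_value[OF w2(1)] .
    have vV: "is_value V" using bs_is_value[OF bsApp(2)] .
    have cs: "closed (subst B 0 V)" using closed_subst[OF cLB cV] .
    have "X R1 R2 (subst B 0 V) (subst B'' 0 W2)"
      using f(2)[unfolded F]
    proof (cases rule: Y.cases)
      case yleaf
      then have "(Lam B, Lam B'') \<in> R2" using s12 by blast
      then obtain N' where n: "reds (Lam B'') (Lam N')"
        "\<forall>P Q. is_value P \<and> is_value Q \<and> (P, Q) \<in> ctx_closure R1 \<longrightarrow> (subst B 0 P, subst N' 0 Q) \<in> R2"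
        using prog2[OF pr] by blast
      have "Lam N' = Lam B''" using reds_value_eq[OF n(1)] by (simp add: is_value_def)
      then have n2: "\<forall>P Q. is_value P \<and> is_value Q \<and> (P, Q) \<in> ctx_closure R1 \<longrightarrow> (subst B 0 P, subst B'' 0 Q) \<in> R2"
        using n(2) by simp
      have "(V, W2) \<in> ctx_closure R1" using Y_ctx[OF w2(2) cV cW2] .
      then have "(subst B 0 V, subst B'' 0 W2) \<in> R2" using n2 vV vW2 by blast
      then show ?thesis by (rule X.xleaf)
    next
      case ylam
      then have "Y R1 (subst B 0 V) (subst B'' 0 W2)" using Y_subst[OF _ c1 w2(2)] by blast
      then show ?thesis using Y_X[OF _ s12 cs] by blast
    qed
    then obtain W' where w': "bs (subst B'' 0 W2) W'" "Y R1 W W'" using bsApp(6)[OF cs] by blast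
    have "bs Q W'" using bs.bsApp[OF f(1)[unfolded F] w2(1) w'(1)] xapp(1) by simp
    then show ?thesis using w'(2) by blast
  qed
qed

lemma sound_conv: "cbv_clb R1 R2 \<Longrightarrow> X R1 R2 P Q \<Longrightarrow> closed P \<Longrightarrow> conv P \<Longrightarrow> conv Q"
  using sound_bs conv_bs by blast

lemma X_efill: "(M, N) \<in> R2 \<Longrightarrow> R1 \<subseteq> R2 \<Longrightarrow> wf_ectx E \<Longrightarrow> X R1 R2 (efill E M) (efill E N)"
proof (induction E)
  case EHole then show ?case by (simp add: X.xleaf)
next
  case (EArg L E)
  then have "X R1 R2 L L" using Y_X[OF Y_refl] by simp
  then show ?case using EArg by (auto intro: X.xapp)
next
  case (EFun E V)
  then have "X R1 R2 V V" using Y_X[OF Y_refl] by simp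
  then show ?case using EFun by (auto intro: X.xapp)
qed

lemma closed_rel_conv: "R \<subseteq> closed_rel \<Longrightarrow> R\<inverse> \<subseteq> closed_rel"
  unfolding closed_rel_def by blast

lemma clb_sym: "cbv_clb R1 R2 \<Longrightarrow> cbv_clb (R1\<inverse>) (R2\<inverse>)"
  unfolding cbv_clb_def using closed_rel_conv by auto

lemma clb_sound: "cbv_clb R1 R2 \<Longrightarrow> R2 \<subseteq> ectx_equiv"
proof
  fix p assume clb: "cbv_clb R1 R2" and "p \<in> R2"
  then obtain M N where p: "p = (M, N)" "(M, N) \<in> R2" by (cases p) auto
  have s12: "R1 \<subseteq> R2" and c2: "R2 \<subseteq> closed_rel" using clb unfolding cbv_clb_def by auto
  have clb': "cbv_clb (R1\<inverse>) (R2\<inverse>)" using clb_sym[OF clb] .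
  have c: "closed M" "closed N" using closed_relD[OF p(2) c2] by auto
  have "conv (efill E M) \<longleftrightarrow> conv (efill E N)" if w: "wf_ectx E" for E
  proof
    assume "conv (efill E M)"
    then show "conv (efill E N)"
      using sound_conv[OF clb X_efill[OF p(2) s12 w] closed_efill[OF w c(1)]] by blast
  next
    assume "conv (efill E N)"
    have "(N, M) \<in> R2\<inverse>" using p(2) by simp
    moreover have "R1\<inverse> \<subseteq> R2\<inverse>" using s12 by blast
    ultimately show "conv (efill E M)"
      using sound_conv[OF clb' X_efill[of N M "R2\<inverse>" "R1\<inverse>" E] closed_efill[OF w c(2)]]
        `conv (efill E N)` w by blast
  qed
  then show "p \<in> ectx_equiv" using c p unfolding ectx_equiv_def by blast
qed

section \<open>Completeness\<close>

lemma H_efill: "H M N \<Longrightarrow> wf_ectx E \<Longrightarrow> H (efill E M) (efill E N)"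
  by (induction E) (auto intro: H.happ H_refl)

lemma H2_equiv: "closed P \<Longrightarrow> closed Q \<Longrightarrow> H P Q \<Longrightarrow> H Q P \<Longrightarrow> (P, Q) \<in> ectx_equiv"
  unfolding ectx_equiv_def
  using H_conv H_efill closed_efill by blast

lemma ctx_closure_H: "(P, Q) \<in> ctx_closure ectx_equiv \<Longrightarrow> H P Q"
  unfolding ctx_closure_def using H_fill by blast

lemma ctx_closure_sym: "(P, Q) \<in> ctx_closure ectx_equiv \<Longrightarrow> (Q, P) \<in> ctx_closure ectx_equiv"
  unfolding ctx_closure_def using equiv_sym by blast

lemma equiv_progress: "clb_progress ectx_equiv ectx_equiv"
  unfolding clb_progress_def
proof (intro allI impI conjI)
  fix M N M' assume mn: "(M, N) \<in> ectx_equiv" and r: "red M M'"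
  have "closed M" using mn equiv_closed by blast
  then have "(M, M') \<in> ectx_equiv" using red_equiv r by blast
  then have "(M', N) \<in> ectx_equiv" using mn equiv_sym equiv_trans by blast
  then show "\<exists>N'. reds N N' \<and> (M', N') \<in> ectx_equiv" by blast
next
  fix M N M' assume mn: "(M, N) \<in> ectx_equiv" and m: "M = Lam M'"
  have "conv M" using m unfolding conv_def is_value_def by blast
  then have "conv N" using mn equiv_conv by blast
  then obtain V where v: "reds N V" "is_value V" unfolding conv_def by blast
  then obtain N' where V: "V = Lam N'" unfolding is_value_def by blast
  have "closed N" using mn equiv_closed by blast
  then have "(N, Lam N') \<in> ectx_equiv" using reds_equiv v V by blast
  then have e: "(Lam M', Lam N') \<in> ectx_equiv" using mn m equiv_trans by blast
  have cM': "closed (Lam M')" "closed (Lam N')" using e equiv_closed by auto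
  have "(subst M' 0 P, subst N' 0 Q) \<in> ectx_equiv"
    if pq: "is_value P \<and> is_value Q \<and> (P, Q) \<in> ctx_closure ectx_equiv" for P Q
  proof -
    have cp: "closed P" "closed Q" using pq unfolding ctx_closure_def by auto
    have h1: "H P Q" "H Q P" using pq ctx_closure_H ctx_closure_sym by blast+
    have a: "closed (subst M' 0 P)" "closed (subst N' 0 Q)" using closed_subst cM' cp by auto
    have "H (subst M' 0 P) (subst M' 0 Q)" using H_subst[OF H_refl h1(1)] .
    moreover have "(subst M' 0 Q, subst N' 0 Q) \<in> ectx_equiv"
      using lam_equiv_subst[OF e] cp pq by blast
    ultimately have x: "H (subst M' 0 P) (subst N' 0 Q)" using H.hcomp a by blast
    have "H (subst N' 0 Q) (subst N' 0 P)" using H_subst[OF H_refl h1(2)] .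
    moreover have "(subst N' 0 P, subst M' 0 P) \<in> ectx_equiv"
      using lam_equiv_subst[OF e] cp pq equiv_sym by blast
    ultimately have y: "H (subst N' 0 Q) (subst M' 0 P)" using H.hcomp a by blast
    show ?thesis using H2_equiv[OF a x y] .
  qed
  then show "\<exists>N'a. reds N (Lam N'a) \<and> (Lam M', Lam N'a) \<in> ectx_equiv \<and>
          (\<forall>P Q. is_value P \<and> is_value Q \<and> (P, Q) \<in> ctx_closure ectx_equiv \<longrightarrow>
                 (subst M' 0 P, subst N'a 0 Q) \<in> ectx_equiv)"
    using v V e by blast
qed

lemma equiv_conv_eq: "ectx_equiv\<inverse> = ectx_equiv"
  using equiv_sym by auto

lemma equiv_clb: "cbv_clb ctx_equiv ectx_equiv"
proof -
  have "ectx_equiv \<subseteq> closed_rel" unfolding closed_rel_def using equiv_closed by auto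
  then show ?thesis
    unfolding cbv_clb_def ctx_eq equiv_conv_eq using equiv_progress by blast
qed

theorem mainTheorem17:
  shows "bisim1 = ctx_equiv \<and> bisim2 = ectx_equiv \<and> cbv_clb ctx_equiv ectx_equiv \<and>
         ctx_equiv = ectx_equiv"
proof -
  have b1: "bisim1 = ctx_equiv"
  proof
    show "bisim1 \<subseteq> ctx_equiv"
      unfolding bisim1_def ctx_eq using clb_sound cbv_clb_def by blast
    show "ctx_equiv \<subseteq> bisim1" unfolding bisim1_def using equiv_clb by blast
  qed
  have b2: "bisim2 = ectx_equiv"
  proof
    show "bisim2 \<subseteq> ectx_equiv"
      unfolding bisim2_def using clb_sound by blast
    show "ectx_equiv \<subseteq> bisim2" unfolding bisim2_def using equiv_clb by blast
  qed
  show ?thesis using b1 b2 equiv_clb ctx_eq by blast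
qed

end
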